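(* Let $\mathcal{H}$ be a complex separable Hilbert space and $\mathcal{E}(\mathcal{H})$ its set of effects. For $A\in\mathcal{E}(\mathcal{H})$, with $A'=I-A$, put $$X(A):=2\|A\|\,\|A'\|-\bigl(\|A\|+\|A'\|-1\bigr),$$ $$Y(A):=2\bigl(\|A\|\,\|A'\|-\|AA'\|\bigr)-\Bigl[\bigl(\|A\|+\|A'\|-1\bigr)-\bigl(\|AA'\|+\|I-AA'\|-1\bigr)\Bigr],$$ and $$\mathcal{S}_2(A):=X(A)-\sqrt{X(A)^2-Y(A)}.$$ Then $\mathcal{S}_2$ is a well-defined real-valued function on $\mathcal{E}(\mathcal{H})$ and is a sharpness measure.
   Context: An effect is a selfadjoint bounded operator $A$ on $\mathcal{H}$ with $\mathbb{O}\le A\le I$. An effect is trivial if $A=\lambda I$, $\lambda\in[0,1]$; a nontrivial projection is a projection other than $\mathbb{O},I$. Norms are operator norms. A function $\mathcal{S}:\mathcal{E}(\mathcal{H})\to\mathbb{R}$ is a sharpness measure if: (S1) $0\le\mathcal{S}(A)\le1$; (S2) $\mathcal{S}(A)=0$ iff $A$ is trivial; (S3) $\mathcal{S}(A)=1$ iff $A$ is a nontrivial projection; (S4) $\mathcal{S}(A')=\mathcal{S}(A)$; (S5) $\mathcal{S}(CAC^{-1})=\mathcal{S}(A)$ for every invertible bounded $C$ such that $CAC^{-1}$ is an effect; (S6) $A\mapsto\mathcal{S}(A)$ is operator-norm continuous. *)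

theory Defs
  imports "HOL-Analysis.Analysis"
begin

text \<open>The inner product is conjugate-linear in the first and linear in the second argument;
  the norm is the one induced by the inner product, and real scalar multiplication
  is the restriction of complex scalar multiplication.\<close>

class complex_inner = real_normed_vector +
  fixes scaleC :: "complex \<Rightarrow> 'a \<Rightarrow> 'a"
    and cinner :: "'a \<Rightarrow> 'a \<Rightarrow> complex"
  assumes scaleC_add_right: "scaleC a (x + y) = scaleC a x + scaleC a y"
    and scaleC_add_left: "scaleC (a + b) x = scaleC a x + scaleC b x"
    and scaleC_scaleC: "scaleC a (scaleC b x) = scaleC (a * b) x"
    and scaleC_one: "scaleC 1 x = x"
    and scaleR_scaleC: "scaleR r x = scaleC (complex_of_real r) x"
    and cinner_add_right: "cinner x (y + z) = cinner x y + cinner x z"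
    and cinner_scaleC_right: "cinner x (scaleC a y) = a * cinner x y"
    and cinner_commute: "cinner y x = cnj (cinner x y)"
    and cinner_self_norm: "cinner x x = complex_of_real ((norm x)\<^sup>2)"

definition separable_hspace :: "'a::topological_space itself \<Rightarrow> bool" where
  "separable_hspace _ \<longleftrightarrow> (\<exists>D::'a set. countable D \<and> closure D = UNIV)"

text \<open>Bounded (complex-)linear operators on H, represented as functions.\<close>

definition bounded_clinear :: "('a::complex_inner \<Rightarrow> 'a) \<Rightarrow> bool" where
  "bounded_clinear A \<longleftrightarrow> bounded_linear A \<and> (\<forall>c x. A (scaleC c x) = scaleC c (A x))"

definition selfadjoint :: "('a::complex_inner \<Rightarrow> 'a) \<Rightarrow> bool" where
  "selfadjoint A \<longleftrightarrow> bounded_clinear A \<and> (\<forall>x y. cinner (A x) y = cinner x (A y))"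

definition is_effect :: "('a::complex_inner \<Rightarrow> 'a) \<Rightarrow> bool" where
  "is_effect A \<longleftrightarrow> selfadjoint A \<and>
     (\<forall>x. 0 \<le> Re (cinner x (A x)) \<and> Re (cinner x (A x)) \<le> Re (cinner x x))"

definition effects :: "('a::complex_inner \<Rightarrow> 'a) set" where
  "effects = {A. is_effect A}"

definition complement_op :: "('a::complex_inner \<Rightarrow> 'a) \<Rightarrow> ('a \<Rightarrow> 'a)" where
  "complement_op A = (\<lambda>x. x - A x)"

definition trivial_effect :: "('a::complex_inner \<Rightarrow> 'a) \<Rightarrow> bool" where
  "trivial_effect A \<longleftrightarrow> (\<exists>l::real. 0 \<le> l \<and> l \<le> 1 \<and> A = (\<lambda>x. scaleR l x))"

definition is_projection :: "('a::complex_inner \<Rightarrow> 'a) \<Rightarrow> bool" where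
  "is_projection P \<longleftrightarrow> selfadjoint P \<and> P \<circ> P = P"

definition nontrivial_projection :: "('a::complex_inner \<Rightarrow> 'a) \<Rightarrow> bool" where
  "nontrivial_projection P \<longleftrightarrow> is_projection P \<and> P \<noteq> (\<lambda>x. 0) \<and> P \<noteq> id"

definition invertible_op :: "('a::complex_inner \<Rightarrow> 'a) \<Rightarrow> bool" where
  "invertible_op C \<longleftrightarrow> bounded_clinear C \<and> bij C \<and> bounded_clinear (inv C)"

definition sharpness_measure :: "(('a::complex_inner \<Rightarrow> 'a) \<Rightarrow> real) \<Rightarrow> bool" where
  "sharpness_measure S \<longleftrightarrow>
     (\<forall>A\<in>effects. 0 \<le> S A \<and> S A \<le> 1) \<and>
     (\<forall>A\<in>effects. S A = 0 \<longleftrightarrow> trivial_effect A) \<and>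
     (\<forall>A\<in>effects. S A = 1 \<longleftrightarrow> nontrivial_projection A) \<and>
     (\<forall>A\<in>effects. S (complement_op A) = S A) \<and>
     (\<forall>A\<in>effects. \<forall>C. invertible_op C \<and> C \<circ> A \<circ> inv C \<in> effects
          \<longrightarrow> S (C \<circ> A \<circ> inv C) = S A) \<and>
     (\<forall>A\<in>effects. \<forall>e>0. \<exists>d>0. \<forall>B\<in>effects.
          onorm (\<lambda>x. B x - A x) < d \<longrightarrow> \<bar>S B - S A\<bar> < e)"

definition X_fun :: "('a::complex_inner \<Rightarrow> 'a) \<Rightarrow> real" where
  "X_fun A = 2 * onorm A * onorm (complement_op A) - (onorm A + onorm (complement_op A) - 1)"

definition Y_fun :: "('a::complex_inner \<Rightarrow> 'a) \<Rightarrow> real" where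
  "Y_fun A =
     2 * (onorm A * onorm (complement_op A) - onorm (A \<circ> complement_op A))
     - ((onorm A + onorm (complement_op A) - 1)
        - (onorm (A \<circ> complement_op A) + onorm (complement_op (A \<circ> complement_op A)) - 1))"

definition S2 :: "('a::complex_inner \<Rightarrow> 'a) \<Rightarrow> real" where
  "S2 A = X_fun A - sqrt ((X_fun A)\<^sup>2 - Y_fun A)"

end

theory Submission
  imports Defs
begin


definition ip :: "'a::complex_inner \<Rightarrow> 'a \<Rightarrow> real" where
  "ip x y = Re (cinner x y)"

lemma ip_add_right: "ip x (y + z) = ip x y + ip x z"
  by (simp add: ip_def cinner_add_right)

lemma ip_sym: "ip y x = ip x (y::'a::complex_inner)"
  unfolding ip_def by (subst cinner_commute) simp

lemma ip_add_left: "ip (x + y) z = ip x z + ip y (z::'a::complex_inner)"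
  by (metis ip_add_right ip_sym)

lemma ip_scaleR_right: "ip x (r *\<^sub>R y) = r * ip x (y::'a::complex_inner)"
  by (simp add: ip_def scaleR_scaleC cinner_scaleC_right)

lemma ip_scaleR_left: "ip (r *\<^sub>R x) y = r * ip x (y::'a::complex_inner)"
  by (metis ip_scaleR_right ip_sym)

lemma ip_minus_right: "ip x (- y) = - ip x (y::'a::complex_inner)"
  using ip_scaleR_right[of x "-1" y] by simp

lemma ip_minus_left: "ip (- x) y = - ip x (y::'a::complex_inner)"
  by (metis ip_minus_right ip_sym)

lemma ip_diff_right: "ip x (y - z) = ip x y - ip x (z::'a::complex_inner)"
  by (simp only: diff_conv_add_uminus ip_add_right ip_minus_right)

lemma ip_diff_left: "ip (x - y) z = ip x z - ip y (z::'a::complex_inner)"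
  by (metis ip_diff_right ip_sym)

lemma ip_self: "ip x x = (norm (x::'a::complex_inner))\<^sup>2"
  by (simp add: ip_def cinner_self_norm)

lemma ip_zero_right: "ip x 0 = 0"
  using ip_scaleR_right[of x 0 0] by simp

lemma ip_le: "ip x y \<le> norm x * norm (y::'a::complex_inner)"
proof -
  have "(norm (x + y))\<^sup>2 = ip (x+y) (x+y)" by (simp add: ip_self)
  also have "\<dots> = ip x x + ip x y + ip y x + ip y y"
    by (simp only: ip_add_left ip_add_right add.assoc)
  also have "\<dots> = (norm x)\<^sup>2 + ip x y + ip y x + (norm y)\<^sup>2"
    by (simp only: ip_self)
  also have "ip y x = ip x y" by (rule ip_sym)
  finally have e: "(norm (x + y))\<^sup>2 = (norm x)\<^sup>2 + 2 * ip x y + (norm y)\<^sup>2" by simp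
  have "(norm (x + y))\<^sup>2 \<le> (norm x + norm y)\<^sup>2"
    by (simp add: norm_triangle_ineq power_mono)
  with e show ?thesis by (simp add: power2_sum)
qed

lemma ip_abs_le: "\<bar>ip x y\<bar> \<le> norm x * norm (y::'a::complex_inner)"
  using ip_le[of x y] ip_le[of x "-y"] by (simp add: ip_minus_right)

lemma posbound:
  fixes B :: "'a::complex_inner \<Rightarrow> 'a"
  assumes bl: "bounded_linear B"
    and sym: "\<And>x y. ip (B x) y = ip x (B y)"
    and pos: "\<And>y. 0 \<le> ip y (B y)"
    and le: "\<And>y. ip y (B y) \<le> d * (norm y)\<^sup>2"
    and d: "0 \<le> d"
  shows "(norm (B x))\<^sup>2 \<le> d * ip x (B x)"
proof -
  interpret B: bounded_linear B by fact
  define u where "u = B x"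
  define b where "b = (norm u)\<^sup>2"
  define t where "t = ip x (B x)"
  have key: "0 \<le> t - 2 * l * b + l\<^sup>2 * (d * b)" for l
  proof -
    have "0 \<le> ip (x - l *\<^sub>R u) (B (x - l *\<^sub>R u))" by (rule pos)
    also have "\<dots> = t - l * ip x (B u) - l * ip u (B x) + l * l * ip u (B u)"
      by (simp add: B.diff B.scaleR ip_diff_left ip_diff_right ip_scaleR_left ip_scaleR_right t_def algebra_simps)
    also have "ip x (B u) = b" using sym[of x u] by (simp add: b_def u_def ip_self ip_sym)
    also have "ip u (B x) = b" by (simp add: b_def u_def ip_self)
    also have "ip u (B u) \<le> d * b" using le[of u] by (simp add: b_def)
    hence "l * l * ip u (B u) \<le> l\<^sup>2 * (d * b)"
      by (simp add: power2_eq_square mult_left_mono)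
    finally show ?thesis by (simp add: algebra_simps)
  qed
  show ?thesis
  proof (cases "d = 0")
    case True
    have "0 \<le> t - 2 * b" using key[of 1] True by simp
    moreover have "t \<le> 0" using le[of x] True by (simp add: t_def)
    moreover have "0 \<le> b" by (simp add: b_def)
    ultimately have "b \<le> 0" by linarith
    hence "(norm (B x))\<^sup>2 \<le> 0" unfolding b_def u_def .
    then show ?thesis using True by simp
  next
    case False
    hence dp: "d > 0" using d by simp
    have "0 \<le> t - 2 * (1/d) * b + (1/d)\<^sup>2 * (d * b)" by (rule key)
    also have "\<dots> = t - b / d" using dp by (simp add: power2_eq_square field_simps)
    finally have "b / d \<le> t" by simp
    hence "b \<le> d * t" using dp by (simp add: divide_le_eq mult.commute)
    thus ?thesis by (simp add: b_def u_def t_def)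
  qed
qed



lemma scaleC_zero: "scaleC c (0::'a::complex_inner) = 0"
proof -
  have "scaleC c (0::'a) = scaleC c (0 + 0)" by simp
  also have "\<dots> = scaleC c 0 + scaleC c 0" by (rule scaleC_add_right)
  finally show ?thesis by simp
qed

lemma scaleC_minus: "scaleC c (- y::'a::complex_inner) = - scaleC c y"
proof -
  have "scaleC c (-y) + scaleC c y = scaleC c (-y + y)" by (rule scaleC_add_right[symmetric])
  also have "\<dots> = 0" by (simp add: scaleC_zero)
  finally show ?thesis by (simp add: eq_neg_iff_add_eq_0)
qed

lemma scaleC_diff: "scaleC c (x - y::'a::complex_inner) = scaleC c x - scaleC c y"
  by (simp only: diff_conv_add_uminus scaleC_add_right scaleC_minus)

lemma cinner_zero_right: "cinner x (0::'a::complex_inner) = 0"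
proof -
  have "cinner x (0::'a) = cinner x (0 + 0)" by simp
  also have "\<dots> = cinner x 0 + cinner x 0" by (rule cinner_add_right)
  finally show ?thesis by simp
qed

lemma cinner_minus_right: "cinner x (- y::'a::complex_inner) = - cinner x y"
proof -
  have "cinner x (-y) + cinner x y = cinner x (-y + y)" by (rule cinner_add_right[symmetric])
  also have "\<dots> = 0" by (simp add: cinner_zero_right)
  finally show ?thesis by (simp add: eq_neg_iff_add_eq_0)
qed

lemma cinner_diff_right: "cinner x (y - z::'a::complex_inner) = cinner x y - cinner x z"
  by (simp only: diff_conv_add_uminus cinner_add_right cinner_minus_right)

lemma cinner_diff_left: "cinner (y - z::'a::complex_inner) x = cinner y x - cinner z x"
proof -
  have "cinner (y - z) x = cnj (cinner x (y - z))" by (rule cinner_commute)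
  also have "\<dots> = cnj (cinner x y) - cnj (cinner x z)" by (simp add: cinner_diff_right)
  also have "cnj (cinner x y) = cinner y x" by (rule cinner_commute[symmetric])
  also have "cnj (cinner x z) = cinner z x" by (rule cinner_commute[symmetric])
  finally show ?thesis .
qed

lemma is_effect_iff: "is_effect A \<longleftrightarrow> selfadjoint A \<and> (\<forall>x. 0 \<le> ip x (A x) \<and> ip x (A x) \<le> (norm x)\<^sup>2)"
  unfolding is_effect_def by (simp add: ip_def[symmetric] ip_self)

lemma selfadjoint_bl: "selfadjoint A \<Longrightarrow> bounded_linear A"
  by (simp add: selfadjoint_def bounded_clinear_def)

lemma effect_bl: "is_effect A \<Longrightarrow> bounded_linear A"
  by (simp add: is_effect_def selfadjoint_bl)

lemma effect_sym: "is_effect A \<Longrightarrow> ip (A x) y = ip x (A y)"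
  by (simp add: is_effect_def selfadjoint_def ip_def)

lemma effect_pos: "is_effect A \<Longrightarrow> 0 \<le> ip x (A x)"
  by (simp add: is_effect_iff)

lemma effect_le1: "is_effect A \<Longrightarrow> ip x (A x) \<le> (norm x)\<^sup>2"
  by (simp add: is_effect_iff)

lemma effect_sq: "is_effect A \<Longrightarrow> (norm (A x))\<^sup>2 \<le> ip x (A x)"
proof -
  assume e: "is_effect A"
  have "(norm (A x))\<^sup>2 \<le> 1 * ip x (A x)"
  proof (rule posbound)
    show "bounded_linear A" by (rule effect_bl[OF e])
    show "ip (A x) y = ip x (A y)" for x y by (rule effect_sym[OF e])
    show "0 \<le> ip y (A y)" for y by (rule effect_pos[OF e])
    show "ip y (A y) \<le> 1 * (norm y)\<^sup>2" for y using effect_le1[OF e, of y] by simp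
  qed simp
  thus ?thesis by simp
qed

lemma effect_normle: "is_effect A \<Longrightarrow> norm (A x) \<le> norm x"
proof -
  assume e: "is_effect A"
  have "(norm (A x))\<^sup>2 \<le> (norm x)\<^sup>2"
    using effect_sq[OF e, of x] effect_le1[OF e, of x] by linarith
  thus ?thesis using norm_ge_zero power2_le_imp_le by blast
qed

lemma effect_onorm_le1: "is_effect A \<Longrightarrow> onorm A \<le> 1"
  by (rule onorm_bound) (simp_all add: effect_normle)

lemma effect_onorm_ge0: "is_effect A \<Longrightarrow> 0 \<le> onorm A"
  by (simp add: effect_bl onorm_pos_le)

lemma effect_ip_le_onorm: "is_effect A \<Longrightarrow> ip x (A x) \<le> onorm A * (norm x)\<^sup>2"
proof -
  assume e: "is_effect A"
  have "ip x (A x) \<le> norm x * norm (A x)" by (rule ip_le)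
  also have "\<dots> \<le> norm x * (onorm A * norm x)"
    by (rule mult_left_mono) (simp_all add: onorm effect_bl e)
  finally show ?thesis by (simp add: power2_eq_square algebra_simps)
qed

lemma effect_sq_onorm: "is_effect A \<Longrightarrow> (norm (A x))\<^sup>2 \<le> onorm A * ip x (A x)"
proof -
  assume e: "is_effect A"
  show ?thesis
  proof (rule posbound)
    show "bounded_linear A" by (rule effect_bl[OF e])
    show "ip (A x) y = ip x (A y)" for x y by (rule effect_sym[OF e])
    show "0 \<le> ip y (A y)" for y by (rule effect_pos[OF e])
    show "ip y (A y) \<le> onorm A * (norm y)\<^sup>2" for y by (rule effect_ip_le_onorm[OF e])
    show "0 \<le> onorm A" by (rule effect_onorm_ge0[OF e])
  qed
qed

lemma selfadjoint_complement: "selfadjoint A \<Longrightarrow> selfadjoint (complement_op A)"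
proof -
  assume s: "selfadjoint A"
  hence bl: "bounded_linear A" by (rule selfadjoint_bl)
  have "bounded_linear (\<lambda>x. x - A x)"
    by (rule bounded_linear_sub[OF bounded_linear_ident bl])
  moreover have "A (scaleC c x) = scaleC c (A x)" for c x
    using s by (simp add: selfadjoint_def bounded_clinear_def)
  moreover have "cinner (A x) y = cinner x (A y)" for x y
    using s by (simp add: selfadjoint_def)
  ultimately show ?thesis
    unfolding selfadjoint_def bounded_clinear_def complement_op_def
    by (simp add: scaleC_diff cinner_diff_left cinner_diff_right)
qed

lemma effect_complement: "is_effect A \<Longrightarrow> is_effect (complement_op A)"
proof -
  assume e: "is_effect A"
  hence "selfadjoint A" by (simp add: is_effect_def)
  hence "selfadjoint (complement_op A)" by (rule selfadjoint_complement)
  moreover have "0 \<le> ip x (complement_op A x) \<and> ip x (complement_op A x) \<le> (norm x)\<^sup>2" for x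
    using effect_pos[OF e, of x] effect_le1[OF e, of x]
    by (simp add: complement_op_def ip_diff_right ip_self)
  ultimately show ?thesis by (simp add: is_effect_iff)
qed

lemma complement_complement: "complement_op (complement_op A) = A"
  by (simp add: complement_op_def)

lemma effect_commute: "is_effect A \<Longrightarrow> A \<circ> complement_op A = complement_op A \<circ> A"
proof -
  assume e: "is_effect A"
  interpret bounded_linear A by (rule effect_bl[OF e])
  show ?thesis by (simp add: fun_eq_iff complement_op_def diff)
qed

lemma effect_AA_ip: "is_effect A \<Longrightarrow> ip x ((A \<circ> complement_op A) x) = ip x (A x) - (norm (A x))\<^sup>2"
proof -
  assume e: "is_effect A"
  interpret bounded_linear A by (rule effect_bl[OF e])
  have "ip x (A (A x)) = ip (A x) (A x)" by (simp add: effect_sym[OF e])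
  thus ?thesis by (simp add: complement_op_def diff ip_diff_right ip_self)
qed

lemma effect_AA: "is_effect A \<Longrightarrow> is_effect (A \<circ> complement_op A)"
proof -
  assume e: "is_effect A"
  have s: "selfadjoint A" using e by (simp add: is_effect_def)
  have sc: "selfadjoint (complement_op A)" by (rule selfadjoint_complement[OF s])
  have bl: "bounded_linear A" by (rule effect_bl[OF e])
  have blc: "bounded_linear (complement_op A)" by (rule selfadjoint_bl[OF sc])
  have comm: "A (complement_op A x) = complement_op A (A x)" for x
    using effect_commute[OF e] by (metis comp_apply)
  have "selfadjoint (A \<circ> complement_op A)"
    unfolding selfadjoint_def bounded_clinear_def
  proof (intro conjI allI)
    show "bounded_linear (A \<circ> complement_op A)" by (rule bounded_linear_compose[OF bl blc, unfolded o_def[symmetric]])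
  next
    fix c x show "(A \<circ> complement_op A) (scaleC c x) = scaleC c ((A \<circ> complement_op A) x)"
      using s sc by (simp add: selfadjoint_def bounded_clinear_def)
  next
    fix x y show "cinner ((A \<circ> complement_op A) x) y = cinner x ((A \<circ> complement_op A) y)"
      using s sc comm by (simp add: selfadjoint_def)
  qed
  moreover have "0 \<le> ip x ((A \<circ> complement_op A) x) \<and> ip x ((A \<circ> complement_op A) x) \<le> (norm x)\<^sup>2" for x
    using effect_AA_ip[OF e, of x] effect_sq[OF e, of x] effect_le1[OF e, of x] zero_le_power2[of "norm (A x)"]
    by (intro conjI; linarith)
  ultimately show ?thesis by (simp add: is_effect_iff)
qed



lemma unit_exists: "\<exists>x::'a::complex_inner. x \<noteq> 0 \<Longrightarrow> \<exists>u::'a. norm u = 1"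
  by (metis norm_sgn)

lemma onorm_witness:
  fixes F :: "'a::complex_inner \<Rightarrow> 'a"
  assumes bl: "bounded_linear F" and b: "b < onorm F" "0 \<le> b"
  shows "\<exists>u. norm u = 1 \<and> b < norm (F u)"
proof (rule ccontr)
  interpret F: bounded_linear F by fact
  assume "\<not> ?thesis"
  hence h: "norm u = 1 \<Longrightarrow> norm (F u) \<le> b" for u by force
  have "norm (F x) \<le> b * norm x" for x
  proof (cases "x = 0")
    case True thus ?thesis by simp
  next
    case False
    have "F x = norm x *\<^sub>R F (sgn x)"
      using False by (simp add: sgn_div_norm F.scaleR)
    hence "norm (F x) = norm x * norm (F (sgn x))" by simp
    also have "\<dots> \<le> norm x * b"
      by (rule mult_left_mono) (simp_all add: h norm_sgn False)
    finally show ?thesis by (simp add: mult.commute)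
  qed
  hence "onorm F \<le> b" using b(2) by (intro onorm_bound) auto
  thus False using b(1) by simp
qed

lemma ip_unit: "norm u = 1 \<Longrightarrow> ip u u = 1"
  by (simp add: ip_self)

lemma approx_eig:
  fixes E :: "'a::complex_inner \<Rightarrow> 'a"
  assumes e: "is_effect E" and nt: "\<exists>x::'a. x \<noteq> 0" and ep: "0 < \<epsilon>"
  shows "\<exists>u. norm u = 1 \<and> norm (E u - onorm E *\<^sub>R u) < \<epsilon> \<and> onorm E - \<epsilon> < ip u (E u)"
proof -
  define M where "M = onorm E"
  have bl: "bounded_linear E" by (rule effect_bl[OF e])
  have M0: "0 \<le> M" by (simp add: M_def effect_onorm_ge0[OF e])
  show ?thesis
  proof (cases "M = 0")
    case True
    hence z: "E x = 0" for x using onorm_eq_0[OF bl] by (simp add: M_def)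
    obtain u :: 'a where u: "norm u = 1" using unit_exists[OF nt] by blast
    show ?thesis using u z True ep by (intro exI[of _ u]) (simp add: M_def ip_zero_right)
  next
    case False
    hence Mp: "0 < M" using M0 by simp
    define \<eta> where "\<eta> = min (M\<^sup>2) (min (\<epsilon>\<^sup>2) (M * \<epsilon>)) / 2"
    have eta_pos: "0 < \<eta>" using Mp ep by (simp add: \<eta>_def)
    have pp: "0 < M\<^sup>2" "0 < \<epsilon>\<^sup>2" "0 < M * \<epsilon>" using Mp ep by auto
    have mm: "min (M\<^sup>2) (min (\<epsilon>\<^sup>2) (M * \<epsilon>)) \<le> M\<^sup>2"
      "min (M\<^sup>2) (min (\<epsilon>\<^sup>2) (M * \<epsilon>)) \<le> \<epsilon>\<^sup>2"
      "min (M\<^sup>2) (min (\<epsilon>\<^sup>2) (M * \<epsilon>)) \<le> M * \<epsilon>" by auto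
    have eta1: "\<eta> < M\<^sup>2" "\<eta> < \<epsilon>\<^sup>2" "\<eta> < M * \<epsilon>"
      using mm pp eta_pos unfolding \<eta>_def by linarith+
    define b where "b = sqrt (M\<^sup>2 - \<eta>)"
    have b0: "0 \<le> b" using eta1 by (simp add: b_def)
    have bsq: "b\<^sup>2 = M\<^sup>2 - \<eta>" using eta1 by (simp add: b_def)
    have bM: "b < M"
    proof -
      have "b\<^sup>2 < M\<^sup>2" using bsq eta_pos by simp
      thus ?thesis using M0 b0 by (simp add: power2_less_imp_less)
    qed
    obtain u where u: "norm u = 1" and bu: "b < norm (E u)"
      using onorm_witness[OF bl, of b] bM b0 by (auto simp: M_def)
    define t where "t = ip u (E u)"
    have "b\<^sup>2 < (norm (E u))\<^sup>2" using bu b0 by (simp add: power_strict_mono)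
    also have "\<dots> \<le> M * t" using effect_sq_onorm[OF e, of u] by (simp add: M_def t_def)
    finally have "M\<^sup>2 - \<eta> < M * t" using bsq by simp
    hence "M * (M - \<eta> / M) < M * t" using Mp by (simp add: power2_eq_square algebra_simps)
    hence tgt: "M - \<eta> / M < t" using Mp by simp
    have "\<eta> / M < \<epsilon>" using eta1(3) Mp by (simp add: divide_less_eq mult.commute)
    hence t1: "M - \<epsilon> < t" using tgt by linarith
    define B where "B = (\<lambda>y. M *\<^sub>R y - E y)"
    interpret E: bounded_linear E by (rule bl)
    have Bbl: "bounded_linear B" unfolding B_def
      by (intro bounded_linear_sub bounded_linear_scaleR_right bounded_linear_ident bl)
    have "(norm (B u))\<^sup>2 \<le> M * ip u (B u)"
    proof (rule posbound[OF Bbl])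
      show "ip (B x) y = ip x (B y)" for x y
        by (simp add: B_def ip_diff_left ip_diff_right ip_scaleR_left ip_scaleR_right effect_sym[OF e] ip_sym[of x y])
      show "0 \<le> ip y (B y)" for y
        using effect_ip_le_onorm[OF e, of y] by (simp add: B_def ip_diff_right ip_scaleR_right ip_self M_def)
      show "ip y (B y) \<le> M * (norm y)\<^sup>2" for y
        using effect_pos[OF e, of y] by (simp add: B_def ip_diff_right ip_scaleR_right ip_self)
      show "0 \<le> M" by (rule M0)
    qed
    also have "ip u (B u) = M - t" using u by (simp add: B_def ip_diff_right ip_scaleR_right ip_self t_def)
    finally have "(norm (B u))\<^sup>2 \<le> M * (M - t)" .
    also have "\<dots> < M * (\<eta> / M)" using tgt Mp by (intro mult_strict_left_mono) auto
    also have "\<dots> = \<eta>" using Mp by simp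
    also have "\<dots> < \<epsilon>\<^sup>2" by (rule eta1(2))
    finally have "norm (B u) < \<epsilon>" using ep by (simp add: power2_less_imp_less less_imp_le)
    hence "norm (E u - M *\<^sub>R u) < \<epsilon>" by (simp add: B_def norm_minus_commute)
    thus ?thesis using u t1 by (intro exI[of _ u]) (simp add: M_def t_def)
  qed
qed

lemma nr_upper: "is_effect E \<Longrightarrow> norm u = 1 \<Longrightarrow> ip u (E u) \<le> onorm E"
  using effect_ip_le_onorm[of E u] by simp

lemma nr_lower: "is_effect E \<Longrightarrow> norm u = 1 \<Longrightarrow> 1 - onorm (complement_op E) \<le> ip u (E u)"
  using nr_upper[OF effect_complement, of E u]
  by (simp add: complement_op_def ip_diff_right ip_self)

lemma onorm_le_nr:
  fixes E :: "'a::complex_inner \<Rightarrow> 'a"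
  assumes e: "is_effect E" and nt: "\<exists>x::'a. x \<noteq> 0"
    and c: "\<And>u. norm u = 1 \<Longrightarrow> ip u (E u) \<le> c"
  shows "onorm E \<le> c"
proof (rule field_le_epsilon)
  fix \<epsilon> :: real assume "0 < \<epsilon>"
  then obtain u where "norm u = 1" "onorm E - \<epsilon> < ip u (E u)" using approx_eig[OF e nt] by blast
  with c show "onorm E \<le> c + \<epsilon>" by force
qed

lemma onorm_compl_le_nr:
  fixes E :: "'a::complex_inner \<Rightarrow> 'a"
  assumes e: "is_effect E" and nt: "\<exists>x::'a. x \<noteq> 0"
    and c: "\<And>u. norm u = 1 \<Longrightarrow> c \<le> ip u (E u)"
  shows "onorm (complement_op E) \<le> 1 - c"
proof (rule onorm_le_nr[OF effect_complement[OF e] nt])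
  fix u :: 'a assume u: "norm u = 1"
  show "ip u (complement_op E u) \<le> 1 - c"
    using c[OF u] u by (simp add: complement_op_def ip_diff_right ip_self)
qed

lemma scaled_lower: "is_effect A \<Longrightarrow> (1 - onorm (complement_op A)) * (norm y)\<^sup>2 \<le> ip y (A y)"
  using effect_ip_le_onorm[OF effect_complement, of A y]
  by (simp add: complement_op_def ip_diff_right ip_self algebra_simps)



definition fq :: "real \<Rightarrow> real" where "fq t = t * (1 - t)"
definition hq :: "real \<Rightarrow> real \<Rightarrow> real" where
  "hq m M = (if m \<le> 1/2 \<and> 1/2 \<le> M then 1/4 else max (fq m) (fq M))"

lemma fq_le_hq: "m \<le> t \<Longrightarrow> t \<le> M \<Longrightarrow> fq t \<le> hq m M"
proof -
  assume a: "m \<le> t" "t \<le> M"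
  show ?thesis
  proof (cases "m \<le> 1/2 \<and> 1/2 \<le> M")
    case True
    have "0 \<le> (t - 1/2)\<^sup>2" by simp
    thus ?thesis using True by (simp add: hq_def fq_def power2_eq_square algebra_simps)
  next
    case False
    hence "M < 1/2 \<or> 1/2 < m" using a by linarith
    hence "fq t \<le> fq M \<or> fq t \<le> fq m"
    proof
      assume "M < 1/2"
      hence "0 \<le> (M - t) * (1 - M - t)" using a by (intro mult_nonneg_nonneg) auto
      thus ?thesis by (simp add: fq_def algebra_simps)
    next
      assume "1/2 < m"
      hence "0 \<le> (t - m) * (t + m - 1)" using a by (intro mult_nonneg_nonneg) auto
      thus ?thesis by (simp add: fq_def algebra_simps)
    qed
    thus ?thesis using False by (auto simp: hq_def)
  qed
qed

lemma lin_min: "m \<le> t \<Longrightarrow> t \<le> M \<Longrightarrow> min (fq m) (fq M) \<le> t - (M - m) * (t - m) - 2 * m * t + m\<^sup>2"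
proof -
  assume a: "m \<le> t" "t \<le> M"
  have eq: "t - (M - m) * (t - m) - 2 * m * t + m\<^sup>2 = (1 - M - m) * t + M * m"
    by (simp add: power2_eq_square algebra_simps)
  show ?thesis
  proof (cases "0 \<le> 1 - M - m")
    case True
    hence "(1 - M - m) * m \<le> (1 - M - m) * t" using a by (intro mult_left_mono) auto
    hence "fq m \<le> (1 - M - m) * t + M * m" by (simp add: fq_def algebra_simps)
    thus ?thesis using eq by simp
  next
    case False
    hence "(1 - M - m) * M \<le> (1 - M - m) * t" using a by (intro mult_left_mono_neg) auto
    hence "fq M \<le> (1 - M - m) * t + M * m" by (simp add: fq_def algebra_simps)
    thus ?thesis using eq by simp
  qed
qed

lemma le_eps4: "(\<And>\<epsilon>. 0 < \<epsilon> \<Longrightarrow> \<epsilon> \<le> 1 \<Longrightarrow> x \<le> y + 4 * \<epsilon>) \<Longrightarrow> x \<le> (y::real)"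
proof (rule field_le_epsilon)
  fix e :: real assume h: "\<And>\<epsilon>. 0 < \<epsilon> \<Longrightarrow> \<epsilon> \<le> 1 \<Longrightarrow> x \<le> y + 4 * \<epsilon>" and e: "0 < e"
  have "x \<le> y + 4 * min 1 (e/4)" using e by (intro h) auto
  moreover have "4 * min 1 (e/4) \<le> e" by linarith
  ultimately show "x \<le> y + e" by linarith
qed

lemma f_approx:
  fixes A :: "'a::complex_inner \<Rightarrow> 'a"
  assumes e: "is_effect A" and u: "norm u = 1" and w: "norm (A u - onorm A *\<^sub>R u) < \<epsilon>" and e1: "\<epsilon> \<le> 1"
  shows "\<bar>ip u ((A \<circ> complement_op A) u) - fq (onorm A)\<bar> \<le> 4 * \<epsilon>"
proof -
  define M where "M = onorm A"
  define w where "w = A u - M *\<^sub>R u"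
  have M0: "0 \<le> M" "M \<le> 1" using effect_onorm_ge0[OF e] effect_onorm_le1[OF e] by (auto simp: M_def)
  have wn: "norm w < \<epsilon>" using w by (simp add: w_def M_def)
  have Au: "A u = M *\<^sub>R u + w" by (simp add: w_def)
  define t where "t = ip u (A u)"
  have t: "t = M + ip u w" using u by (simp add: t_def Au ip_add_right ip_scaleR_right ip_self)
  have tw: "\<bar>ip u w\<bar> \<le> norm w" using ip_abs_le[of u w] u by simp
  define a where "a = norm (A u)"
  have "\<bar>norm (A u) - norm (M *\<^sub>R u)\<bar> \<le> norm (A u - M *\<^sub>R u)" by (rule norm_triangle_ineq3)
  hence am: "\<bar>a - M\<bar> \<le> norm w" using u M0 by (simp add: a_def w_def)
  have a1: "0 \<le> a" "a \<le> 1" using effect_normle[OF e, of u] u by (auto simp: a_def)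
  have "\<bar>a\<^sup>2 - M\<^sup>2\<bar> = \<bar>a - M\<bar> * \<bar>a + M\<bar>" by (simp add: power2_eq_square algebra_simps flip: abs_mult)
  also have "\<dots> \<le> \<epsilon> * 3"
    using am wn a1 M0 by (intro mult_mono) auto
  finally have sq: "\<bar>a\<^sup>2 - M\<^sup>2\<bar> \<le> 3 * \<epsilon>" by simp
  have v: "ip u ((A \<circ> complement_op A) u) = t - a\<^sup>2" using effect_AA_ip[OF e, of u] by (simp add: t_def a_def)
  show ?thesis using v t tw wn sq unfolding M_def[symmetric] fq_def
    by (simp add: algebra_simps power2_eq_square abs_le_iff) linarith?
qed



lemma G1:
  fixes E :: "'a::complex_inner \<Rightarrow> 'a"
  assumes e: "is_effect E" and nt: "\<exists>x::'a. x \<noteq> 0"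
  shows "1 - onorm (complement_op (E \<circ> complement_op E)) \<le> fq (onorm E)"
    and "fq (onorm E) \<le> onorm (E \<circ> complement_op E)"
proof -
  have ee: "is_effect (E \<circ> complement_op E)" by (rule effect_AA[OF e])
  have *: "\<exists>u. norm u = 1 \<and> \<bar>ip u ((E \<circ> complement_op E) u) - fq (onorm E)\<bar> \<le> 4 * \<epsilon>"
    if "0 < \<epsilon>" "\<epsilon> \<le> 1" for \<epsilon>
  proof -
    obtain u where u: "norm u = 1" "norm (E u - onorm E *\<^sub>R u) < \<epsilon>"
      using approx_eig[OF e nt \<open>0 < \<epsilon>\<close>] by blast
    show ?thesis using f_approx[OF e u that(2)] u by blast
  qed
  show "1 - onorm (complement_op (E \<circ> complement_op E)) \<le> fq (onorm E)"
  proof (rule le_eps4)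
    fix \<epsilon> :: real assume "0 < \<epsilon>" "\<epsilon> \<le> 1"
    then obtain u where u: "norm u = 1" "\<bar>ip u ((E \<circ> complement_op E) u) - fq (onorm E)\<bar> \<le> 4 * \<epsilon>"
      using * by blast
    show "1 - onorm (complement_op (E \<circ> complement_op E)) \<le> fq (onorm E) + 4 * \<epsilon>"
      using nr_lower[OF ee u(1)] u(2) by linarith
  qed
  show "fq (onorm E) \<le> onorm (E \<circ> complement_op E)"
  proof (rule le_eps4)
    fix \<epsilon> :: real assume "0 < \<epsilon>" "\<epsilon> \<le> 1"
    then obtain u where u: "norm u = 1" "\<bar>ip u ((E \<circ> complement_op E) u) - fq (onorm E)\<bar> \<le> 4 * \<epsilon>"
      using * by blast
    show "fq (onorm E) \<le> onorm (E \<circ> complement_op E) + 4 * \<epsilon>"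
      using nr_upper[OF ee u(1)] u(2) by linarith
  qed
qed

lemma Bbound:
  fixes A :: "'a::complex_inner \<Rightarrow> 'a"
  assumes e: "is_effect A" and mM: "1 - onorm (complement_op A) \<le> onorm A"
  shows "(norm (A x - (1 - onorm (complement_op A)) *\<^sub>R x))\<^sup>2
     \<le> (onorm A - (1 - onorm (complement_op A))) * (ip x (A x) - (1 - onorm (complement_op A)) * (norm x)\<^sup>2)"
proof -
  define m where "m = 1 - onorm (complement_op A)"
  define M where "M = onorm A"
  define B where "B = (\<lambda>y. A y - m *\<^sub>R y)"
  have bl: "bounded_linear A" by (rule effect_bl[OF e])
  have Bbl: "bounded_linear B" unfolding B_def
    by (intro bounded_linear_sub bounded_linear_scaleR_right bounded_linear_ident bl)
  have "(norm (B x))\<^sup>2 \<le> (M - m) * ip x (B x)"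
  proof (rule posbound[OF Bbl])
    show "ip (B x) y = ip x (B y)" for x y
      by (simp add: B_def ip_diff_left ip_diff_right ip_scaleR_left ip_scaleR_right effect_sym[OF e] ip_sym[of x y])
    show "0 \<le> ip y (B y)" for y
      using scaled_lower[OF e, of y] by (simp add: B_def ip_diff_right ip_scaleR_right ip_self m_def)
    show "ip y (B y) \<le> (M - m) * (norm y)\<^sup>2" for y
      using effect_ip_le_onorm[OF e, of y]
      by (simp add: B_def ip_diff_right ip_scaleR_right ip_self M_def algebra_simps)
    show "0 \<le> M - m" using mM by (simp add: M_def m_def)
  qed
  thus ?thesis by (simp add: B_def m_def M_def ip_diff_right ip_scaleR_right ip_self)
qed

lemma mM_le:
  fixes A :: "'a::complex_inner \<Rightarrow> 'a"
  assumes e: "is_effect A" and nt: "\<exists>x::'a. x \<noteq> 0"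
  shows "1 - onorm (complement_op A) \<le> onorm A"
proof -
  obtain u :: 'a where u: "norm u = 1" using unit_exists[OF nt] by blast
  show ?thesis using nr_lower[OF e u] nr_upper[OF e u] by linarith
qed

lemma spec_facts:
  fixes A :: "'a::complex_inner \<Rightarrow> 'a"
  assumes e: "is_effect A" and nt: "\<exists>x::'a. x \<noteq> 0"
  defines "M \<equiv> onorm A" and "m \<equiv> 1 - onorm (complement_op A)"
    and "N \<equiv> onorm (A \<circ> complement_op A)" and "n \<equiv> 1 - onorm (complement_op (A \<circ> complement_op A))"
  shows "0 \<le> m" "m \<le> M" "M \<le> 1" "N \<le> hq m M" "n \<le> fq M" "n \<le> fq m"
    "fq M \<le> N" "fq m \<le> N" "min (fq m) (fq M) \<le> n"
proof -
  have ec: "is_effect (complement_op A)" by (rule effect_complement[OF e])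
  have ee: "is_effect (A \<circ> complement_op A)" by (rule effect_AA[OF e])
  show m0: "0 \<le> m" using effect_onorm_le1[OF ec] by (simp add: m_def)
  show mM: "m \<le> M" using mM_le[OF e nt] by (simp add: m_def M_def)
  show "M \<le> 1" using effect_onorm_le1[OF e] by (simp add: M_def)
  have cc: "complement_op A \<circ> complement_op (complement_op A) = A \<circ> complement_op A"
    by (simp add: complement_complement effect_commute[OF e])
  have fqm: "fq (onorm (complement_op A)) = fq m" by (simp add: m_def fq_def algebra_simps)
  show "n \<le> fq M" "fq M \<le> N" using G1[OF e nt] by (simp_all add: n_def M_def N_def)
  show "n \<le> fq m" "fq m \<le> N" using G1[OF ec nt] by (simp_all add: cc fqm n_def N_def)
  have trange: "m \<le> ip u (A u) \<and> ip u (A u) \<le> M" if u: "norm u = 1" for u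
    using nr_lower[OF e u] nr_upper[OF e u] by (simp add: m_def M_def)
  show "N \<le> hq m M" unfolding N_def
  proof (rule onorm_le_nr[OF ee nt])
    fix u :: 'a assume u: "norm u = 1"
    define t where "t = ip u (A u)"
    have tr: "m \<le> t" "t \<le> M" using trange[OF u] by (auto simp: t_def)
    have t0: "0 \<le> t" using m0 tr by linarith
    have "t \<le> norm (A u)" using ip_le[of u "A u"] u by (simp add: t_def)
    hence "t\<^sup>2 \<le> (norm (A u))\<^sup>2" using t0 by (simp add: power_mono)
    hence "ip u ((A \<circ> complement_op A) u) \<le> fq t"
      using effect_AA_ip[OF e, of u] by (simp add: fq_def t_def power2_eq_square algebra_simps)
    also have "\<dots> \<le> hq m M" by (rule fq_le_hq[OF tr])
    finally show "ip u ((A \<circ> complement_op A) u) \<le> hq m M" .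
  qed
  have "onorm (complement_op (A \<circ> complement_op A)) \<le> 1 - min (fq m) (fq M)"
  proof (rule onorm_compl_le_nr[OF ee nt])
    fix u :: 'a assume u: "norm u = 1"
    define t where "t = ip u (A u)"
    have tr: "m \<le> t" "t \<le> M" using trange[OF u] by (auto simp: t_def)
    have "(norm (A u - m *\<^sub>R u))\<^sup>2 \<le> (M - m) * (t - m)"
      using Bbound[OF e mM_le[OF e nt], of u] u by (simp add: m_def M_def t_def)
    moreover have "(norm (A u - m *\<^sub>R u))\<^sup>2 = (norm (A u))\<^sup>2 - 2 * m * t + m\<^sup>2"
    proof -
      have "(norm (A u - m *\<^sub>R u))\<^sup>2 = ip (A u - m *\<^sub>R u) (A u - m *\<^sub>R u)" by (simp add: ip_self)
      also have "\<dots> = ip (A u) (A u) - m * ip u (A u) - m * ip (A u) u + m * m * ip u u"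
        by (simp add: ip_diff_left ip_diff_right ip_scaleR_left ip_scaleR_right algebra_simps)
      also have "ip (A u) u = t" by (simp add: t_def ip_sym)
      finally show ?thesis using u by (simp add: ip_self t_def power2_eq_square algebra_simps)
    qed
    ultimately have "t - (M - m) * (t - m) - 2 * m * t + m\<^sup>2 \<le> t - (norm (A u))\<^sup>2" by linarith
    moreover have "ip u ((A \<circ> complement_op A) u) = t - (norm (A u))\<^sup>2"
      using effect_AA_ip[OF e, of u] by (simp add: t_def)
    ultimately show "min (fq m) (fq M) \<le> ip u ((A \<circ> complement_op A) u)"
      using lin_min[OF tr] by linarith
  qed
  thus "min (fq m) (fq M) \<le> n" by (simp add: n_def)
qed

lemma trivial_of_eq:
  fixes A :: "'a::complex_inner \<Rightarrow> 'a"
  assumes e: "is_effect A" and eq: "1 - onorm (complement_op A) = onorm A"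
  shows "A = (\<lambda>x. onorm A *\<^sub>R x)"
proof
  fix x
  have "(norm (A x - (1 - onorm (complement_op A)) *\<^sub>R x))\<^sup>2 \<le> 0"
    using Bbound[OF e, of x] eq by simp
  thus "A x = onorm A *\<^sub>R x" using eq by simp
qed



lemma hmin_le:
  fixes m M :: real
  assumes "0 \<le> m" "m \<le> M" "M \<le> 1"
  shows "hq m M + min (fq m) (fq M) \<le> M + m - 2 * M * m"
    and "m < M \<Longrightarrow> hq m M + min (fq m) (fq M) < M + m - 2 * M * m"
proof -
  have i1: "M + m - 2 * M * m - 1/4 - fq m = (M - m)\<^sup>2 - (M - 1/2)\<^sup>2"
    by (simp add: fq_def power2_eq_square algebra_simps)
  have i2: "M + m - 2 * M * m - 1/4 - fq M = (M - m)\<^sup>2 - (m - 1/2)\<^sup>2"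
    by (simp add: fq_def power2_eq_square algebra_simps)
  have i3: "M + m - 2 * M * m - fq m - fq M = (M - m)\<^sup>2"
    by (simp add: fq_def power2_eq_square algebra_simps)
  have main: "hq m M + min (fq m) (fq M) \<le> M + m - 2 * M * m \<and>
      (m < M \<longrightarrow> hq m M + min (fq m) (fq M) < M + m - 2 * M * m)"
  proof (cases "m \<le> 1/2 \<and> 1/2 \<le> M")
    case True
    hence h: "hq m M = 1/4" by (simp add: hq_def)
    have a: "(M - 1/2)\<^sup>2 \<le> (M - m)\<^sup>2" using True by (intro power_mono) auto
    have b: "m < 1/2 \<Longrightarrow> (M - 1/2)\<^sup>2 < (M - m)\<^sup>2" using True by (intro power_strict_mono) auto
    have c: "(m - 1/2)\<^sup>2 < (M - m)\<^sup>2" if a: "m = 1/2" "m < M"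
    proof -
      have "(m - 1/2)\<^sup>2 = 0" using a(1) by simp
      moreover have "0 < (M - m)\<^sup>2" using a(2) by simp
      ultimately show ?thesis by linarith
    qed
    show ?thesis
    proof (intro conjI impI)
      show "hq m M + min (fq m) (fq M) \<le> M + m - 2 * M * m" using h i1 a by linarith
      assume "m < M"
      show "hq m M + min (fq m) (fq M) < M + m - 2 * M * m"
      proof (cases "m < 1/2")
        case True thus ?thesis using h i1 b by linarith
      next
        case False hence "m = 1/2" using \<open>m \<le> 1/2 \<and> 1/2 \<le> M\<close> by simp
        thus ?thesis using h i2 c \<open>m < M\<close> by linarith
      qed
    qed
  next
    case False
    hence h: "hq m M = max (fq m) (fq M)" unfolding hq_def by (rule if_not_P)
    have "max (fq m) (fq M) + min (fq m) (fq M) = fq m + fq M" by simp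
    moreover have "m < M \<Longrightarrow> 0 < (M - m)\<^sup>2" by simp
    ultimately show ?thesis using h i3 by (smt (verit) zero_le_power2)
  qed
  thus "hq m M + min (fq m) (fq M) \<le> M + m - 2 * M * m" by blast
  show "m < M \<Longrightarrow> hq m M + min (fq m) (fq M) < M + m - 2 * M * m" using main by blast
qed

lemma RL:
  fixes p q N K :: real
  defines "M \<equiv> p" and "m \<equiv> 1 - q" and "n \<equiv> 1 - K"
  defines "X \<equiv> 2 * p * q - (p + q - 1)"
  defines "Y \<equiv> 2 * (p * q - N) - ((p + q - 1) - (N + K - 1))"
  assumes h: "0 \<le> m" "m \<le> M" "M \<le> 1" "N \<le> hq m M" "n \<le> fq M" "n \<le> fq m"
    "fq M \<le> N" "fq m \<le> N" "min (fq m) (fq M) \<le> n"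
  shows "0 \<le> X\<^sup>2 - Y" "0 \<le> X - sqrt (X\<^sup>2 - Y)" "X - sqrt (X\<^sup>2 - Y) \<le> 1"
    "X - sqrt (X\<^sup>2 - Y) = 0 \<longleftrightarrow> m = M"
    "X - sqrt (X\<^sup>2 - Y) = 1 \<longleftrightarrow> m = 0 \<and> M = 1 \<and> N = 0"
proof -
  have Xe: "X = M + m - 2 * M * m" by (simp add: X_def M_def m_def algebra_simps)
  have Ye: "Y = X - N - n" by (simp add: X_def Y_def n_def algebra_simps)
  have X0: "0 \<le> X"
  proof -
    have "0 \<le> M * (1 - m)" "0 \<le> m * (1 - M)" using h by auto
    thus ?thesis using Xe by (simp add: algebra_simps)
  qed
  have X1e: "1 - X = (1 - M) * (1 - m) + M * m" using Xe by (simp add: algebra_simps)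
  have X1p: "0 \<le> (1 - M) * (1 - m)" "0 \<le> M * m" using h by auto
  have X1: "X \<le> 1" using X1e X1p by linarith
  have nmin: "n = min (fq m) (fq M)" using h by linarith
  have quart: "X\<^sup>2 - X + fq m + fq M = 4 * (m * (1 - M)) * (M * (1 - m))"
    by (simp add: Xe fq_def power2_eq_square algebra_simps)
  have "0 \<le> 4 * (m * (1 - M)) * (M * (1 - m))" using h by auto
  moreover have "fq m + fq M \<le> N + n" using h nmin by linarith
  ultimately show D: "0 \<le> X\<^sup>2 - Y" using quart Ye by linarith
  have Y0: "0 \<le> Y" using hmin_le(1)[OF h(1-3)] h(4) nmin Ye Xe by linarith
  have sle: "sqrt (X\<^sup>2 - Y) \<le> X"
  proof -
    have "sqrt (X\<^sup>2 - Y) \<le> sqrt (X\<^sup>2)" using Y0 by (intro real_sqrt_le_mono) simp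
    moreover have "sqrt (X\<^sup>2) = X" using X0 by simp
    ultimately show ?thesis by simp
  qed
  show "0 \<le> X - sqrt (X\<^sup>2 - Y)" using sle by simp
  show "X - sqrt (X\<^sup>2 - Y) \<le> 1" using X1 real_sqrt_ge_zero[OF D] by linarith
  have Seq0: "X - sqrt (X\<^sup>2 - Y) = 0 \<longleftrightarrow> Y = 0"
  proof
    assume "X - sqrt (X\<^sup>2 - Y) = 0"
    hence "sqrt (X\<^sup>2 - Y) = X" by simp
    hence "(sqrt (X\<^sup>2 - Y))\<^sup>2 = X\<^sup>2" by simp
    thus "Y = 0" using D by simp
  next
    assume "Y = 0" thus "X - sqrt (X\<^sup>2 - Y) = 0" using X0 by simp
  qed
  show "X - sqrt (X\<^sup>2 - Y) = 0 \<longleftrightarrow> m = M"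
  proof
    assume "X - sqrt (X\<^sup>2 - Y) = 0"
    hence "Y = 0" using Seq0 by simp
    show "m = M"
    proof (rule ccontr)
      assume "m \<noteq> M" hence "m < M" using h by simp
      thus False using hmin_le(2)[OF h(1-3)] h(4) nmin Ye Xe \<open>Y = 0\<close> by linarith
    qed
  next
    assume eq: "m = M"
    have "hq M M = fq M"
    proof (cases "M \<le> 1/2 \<and> 1/2 \<le> M")
      case True hence M2: "M = 1/2" by linarith
      show ?thesis unfolding hq_def fq_def M2 by simp
    next
      case False thus ?thesis unfolding hq_def by (subst if_not_P) simp_all
    qed
    hence "N = fq M" using h eq by simp
    moreover have "n = fq M" using nmin eq by simp
    ultimately have "Y = 0" using Ye Xe eq by (simp add: fq_def algebra_simps)
    thus "X - sqrt (X\<^sup>2 - Y) = 0" using Seq0 by simp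
  qed
  show "X - sqrt (X\<^sup>2 - Y) = 1 \<longleftrightarrow> m = 0 \<and> M = 1 \<and> N = 0"
  proof
    assume S1: "X - sqrt (X\<^sup>2 - Y) = 1"
    have "X = 1" using S1 X1 real_sqrt_ge_zero[OF D] by linarith
    hence "(1 - M) * (1 - m) = 0" "M * m = 0" using X1e X1p by linarith+
    hence mM: "m = 0 \<and> M = 1" using h by auto
    have "sqrt (X\<^sup>2 - Y) = 0" using S1 \<open>X = 1\<close> by simp
    hence "X\<^sup>2 - Y = 0" using D by simp
    hence "Y = 1" using \<open>X = 1\<close> by simp
    moreover have "n = 0" using nmin mM by (simp add: fq_def)
    ultimately have "N = 0" using Ye \<open>X = 1\<close> by simp
    thus "m = 0 \<and> M = 1 \<and> N = 0" using mM by simp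
  next
    assume a: "m = 0 \<and> M = 1 \<and> N = 0"
    hence "X = 1" using Xe by simp
    moreover have "n = 0" using nmin a by (simp add: fq_def)
    ultimately have "Y = 1" using Ye a by simp
    thus "X - sqrt (X\<^sup>2 - Y) = 1" using \<open>X = 1\<close> by simp
  qed
qed



lemma sim_le:
  fixes E F C :: "'a::complex_inner \<Rightarrow> 'a"
  assumes e: "is_effect E" and nt: "\<exists>x::'a. x \<noteq> 0"
    and C: "bounded_linear C" and Ci: "bounded_linear (inv C)" and bij: "bij C"
    and F: "bounded_linear F" and FE: "F = C \<circ> E \<circ> inv C"
  shows "onorm E \<le> onorm F"
proof (rule field_le_epsilon)
  fix e :: real assume e0: "0 < e"
  define M where "M = onorm E"
  define c1 where "c1 = onorm C"
  define c2 where "c2 = onorm (inv C)"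
  have c10: "0 \<le> c1" "0 \<le> c2" using onorm_pos_le[OF C] onorm_pos_le[OF Ci] by (auto simp: c1_def c2_def)
  define \<epsilon> where "\<epsilon> = e / (c1 * c2 + 1)"
  have den: "0 < c1 * c2 + 1" using c10 by (simp add: add_nonneg_pos)
  have ep: "0 < \<epsilon>" using e0 den by (simp add: \<epsilon>_def)
  obtain u where u: "norm u = 1" and w: "norm (E u - M *\<^sub>R u) < \<epsilon>"
    using approx_eig[OF e nt ep] by (auto simp: M_def)
  interpret C: bounded_linear C by (rule C)
  interpret F: bounded_linear F by (rule F)
  have invCC: "inv C (C z) = z" for z using bij by (simp add: bij_is_inj)
  define y where "y = C u"
  have "norm u \<le> c2 * norm y"
    using onorm[OF Ci, of y] by (simp add: y_def invCC c2_def)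
  hence y1: "1 \<le> c2 * norm y" using u by simp
  have Fy: "F y = C (E u)" by (simp add: FE y_def invCC)
  have "norm (F y - M *\<^sub>R y) = norm (C (E u - M *\<^sub>R u))" unfolding Fy by (simp add: y_def C.diff C.scaleR)
  also have "\<dots> \<le> c1 * norm (E u - M *\<^sub>R u)" using onorm[OF C] by (simp add: c1_def)
  also have "\<dots> \<le> c1 * \<epsilon>" using w c10 by (intro mult_left_mono) auto
  finally have d1: "norm (F y - M *\<^sub>R y) \<le> c1 * \<epsilon>" .
  have M0: "0 \<le> M" by (simp add: M_def effect_onorm_ge0[OF e])
  have "M * norm y = norm (M *\<^sub>R y)" using M0 by simp
  also have "\<dots> \<le> norm (F y) + norm (F y - M *\<^sub>R y)"
    using norm_triangle_sub[of "M *\<^sub>R y" "F y"] by (simp add: norm_minus_commute)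
  also have "\<dots> \<le> onorm F * norm y + c1 * \<epsilon>" using onorm[OF F, of y] d1 by linarith
  finally have key: "(M - onorm F) * norm y \<le> c1 * \<epsilon>" by (simp add: algebra_simps)
  show "onorm E \<le> onorm F + e"
  proof (cases "M \<le> onorm F")
    case True thus ?thesis using e0 by (simp add: M_def)
  next
    case False
    hence pos: "0 < M - onorm F" by simp
    have "M - onorm F \<le> (M - onorm F) * (c2 * norm y)"
      using y1 pos by (simp add: mult_le_cancel_left1)
    also have "\<dots> = c2 * ((M - onorm F) * norm y)" by simp
    also have "\<dots> \<le> c2 * (c1 * \<epsilon>)" using key c10 by (intro mult_left_mono) auto
    also have "\<dots> = (c1 * c2) * e / (c1 * c2 + 1)" by (simp add: \<epsilon>_def)
    also have "\<dots> \<le> e"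
      using den e0 c10 by (simp add: divide_le_eq)
    finally show ?thesis by (simp add: M_def)
  qed
qed

lemma sim_eq:
  fixes E F C :: "'a::complex_inner \<Rightarrow> 'a"
  assumes e: "is_effect E" and f: "is_effect F" and nt: "\<exists>x::'a. x \<noteq> 0"
    and C: "invertible_op C" and FE: "F = C \<circ> E \<circ> inv C"
  shows "onorm F = onorm E"
proof -
  have Cb: "bounded_linear C" and Cib: "bounded_linear (inv C)" and bij: "bij C"
    using C by (auto simp: invertible_op_def bounded_clinear_def)
  have 1: "onorm E \<le> onorm F" by (rule sim_le[OF e nt Cb Cib bij effect_bl[OF f] FE])
  have bij2: "bij (inv C)" by (rule bij_imp_bij_inv[OF bij])
  have ii: "inv (inv C) = C" by (rule inv_inv_eq[OF bij])
  have EF: "E = inv C \<circ> F \<circ> inv (inv C)"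
    using bij by (simp add: FE ii fun_eq_iff bij_is_inj bij_is_surj surj_f_inv_f)
  have 2: "onorm F \<le> onorm E"
    by (rule sim_le[OF f nt Cib _ bij2 effect_bl[OF e] EF]) (simp add: ii Cb)
  show ?thesis using 1 2 by simp
qed

lemma sim_compl:
  fixes A C :: "'a::complex_inner \<Rightarrow> 'a"
  assumes C: "invertible_op C"
  shows "complement_op (C \<circ> A \<circ> inv C) = C \<circ> complement_op A \<circ> inv C"
proof -
  have Cb: "bounded_linear C" and bij: "bij C"
    using C by (auto simp: invertible_op_def bounded_clinear_def)
  interpret C: bounded_linear C by (rule Cb)
  show ?thesis using bij by (simp add: fun_eq_iff complement_op_def C.diff bij_is_surj surj_f_inv_f)
qed

lemma sim_AA:
  fixes A C :: "'a::complex_inner \<Rightarrow> 'a"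
  assumes C: "invertible_op C"
  shows "(C \<circ> A \<circ> inv C) \<circ> complement_op (C \<circ> A \<circ> inv C) = C \<circ> (A \<circ> complement_op A) \<circ> inv C"
proof -
  have bij: "bij C" using C by (auto simp: invertible_op_def)
  show ?thesis using bij by (simp add: sim_compl[OF C] fun_eq_iff bij_is_inj)
qed

lemma S2_sim:
  fixes A C :: "'a::complex_inner \<Rightarrow> 'a"
  assumes a: "is_effect A" and C: "invertible_op C" and b: "is_effect (C \<circ> A \<circ> inv C)"
  shows "S2 (C \<circ> A \<circ> inv C) = S2 A"
proof (cases "\<exists>x::'a. x \<noteq> 0")
  case False
  hence z: "\<And>z::'a. z = 0" by blast
  have "(C \<circ> A \<circ> inv C) x = A x" for x using z[of "(C \<circ> A \<circ> inv C) x"] z[of "A x"] by simp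
  hence "C \<circ> A \<circ> inv C = A" by (rule ext)
  thus ?thesis by simp
next
  case nt: True
  define B where "B = C \<circ> A \<circ> inv C"
  have b': "is_effect B" using b by (simp add: B_def)
  have 1: "onorm B = onorm A" by (rule sim_eq[OF a b' nt C B_def])
  have 2: "onorm (complement_op B) = onorm (complement_op A)"
    by (rule sim_eq[OF effect_complement[OF a] effect_complement[OF b'] nt C])
       (simp add: B_def sim_compl[OF C])
  have 3: "onorm (B \<circ> complement_op B) = onorm (A \<circ> complement_op A)"
    by (rule sim_eq[OF effect_AA[OF a] effect_AA[OF b'] nt C]) (simp add: B_def sim_AA[OF C])
  have 4: "onorm (complement_op (B \<circ> complement_op B)) = onorm (complement_op (A \<circ> complement_op A))"
    by (rule sim_eq[OF effect_complement[OF effect_AA[OF a]] effect_complement[OF effect_AA[OF b']] nt C])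
       (unfold B_def sim_AA[OF C], rule sim_compl[OF C])
  show ?thesis unfolding B_def[symmetric] S2_def X_fun_def Y_fun_def 1 2 3 4 ..
qed



definition Xr :: "real \<Rightarrow> real \<Rightarrow> real" where "Xr p q = 2 * p * q - (p + q - 1)"
definition Yr :: "real \<Rightarrow> real \<Rightarrow> real \<Rightarrow> real \<Rightarrow> real" where
  "Yr p q N K = 2 * (p * q - N) - ((p + q - 1) - (N + K - 1))"

lemma X_fun_eq: "X_fun A = Xr (onorm A) (onorm (complement_op A))"
  by (simp add: X_fun_def Xr_def)
lemma Y_fun_eq: "Y_fun A = Yr (onorm A) (onorm (complement_op A)) (onorm (A \<circ> complement_op A))
   (onorm (complement_op (A \<circ> complement_op A)))"
  by (simp add: Y_fun_def Yr_def)
lemma S2_eq: "S2 A = X_fun A - sqrt ((X_fun A)\<^sup>2 - Y_fun A)"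
  by (simp add: S2_def)

lemma onorm_diff_bound:
  fixes F G :: "'a::real_normed_vector \<Rightarrow> 'b::real_normed_vector"
  assumes F: "bounded_linear F" and G: "bounded_linear G"
    and b: "\<And>x. norm (F x - G x) \<le> c * norm x" and c: "0 \<le> c"
  shows "\<bar>onorm F - onorm G\<bar> \<le> c"
proof -
  have FG: "bounded_linear (\<lambda>x. F x - G x)" by (rule bounded_linear_sub[OF F G])
  have GF: "bounded_linear (\<lambda>x. G x - F x)" by (rule bounded_linear_sub[OF G F])
  have d1: "onorm (\<lambda>x. F x - G x) \<le> c" by (rule onorm_bound[OF c b])
  have d2: "onorm (\<lambda>x. G x - F x) \<le> c"
    by (rule onorm_bound[OF c]) (simp add: norm_minus_commute b)
  have "onorm F = onorm (\<lambda>x. (F x - G x) + G x)" by simp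
  also have "\<dots> \<le> onorm (\<lambda>x. F x - G x) + onorm G" by (rule onorm_triangle[OF FG G])
  finally have 1: "onorm F \<le> onorm (\<lambda>x. F x - G x) + onorm G" .
  have "onorm G = onorm (\<lambda>x. (G x - F x) + F x)" by simp
  also have "\<dots> \<le> onorm (\<lambda>x. G x - F x) + onorm F" by (rule onorm_triangle[OF GF F])
  finally have 2: "onorm G \<le> onorm (\<lambda>x. G x - F x) + onorm F" .
  show ?thesis using 1 2 d1 d2 by linarith
qed

lemma sqrt_diff: "0 \<le> a \<Longrightarrow> 0 \<le> b \<Longrightarrow> \<bar>sqrt a - sqrt b\<bar> \<le> sqrt \<bar>a - b\<bar>"
proof -
  assume a: "0 \<le> a" "0 \<le> b"
  have "sqrt a \<le> sqrt (b + \<bar>a - b\<bar>)" by (intro real_sqrt_le_mono) linarith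
  also have "\<dots> \<le> sqrt b + sqrt \<bar>a - b\<bar>" by (rule sqrt_add_le_add_sqrt) (use a in auto)
  finally have 1: "sqrt a \<le> sqrt b + sqrt \<bar>a - b\<bar>" .
  have "sqrt b \<le> sqrt (a + \<bar>a - b\<bar>)" by (intro real_sqrt_le_mono) linarith
  also have "\<dots> \<le> sqrt a + sqrt \<bar>a - b\<bar>" by (rule sqrt_add_le_add_sqrt) (use a in auto)
  finally have 2: "sqrt b \<le> sqrt a + sqrt \<bar>a - b\<bar>" .
  show ?thesis using 1 2 by linarith
qed

lemma RC:
  fixes p q N K p' q' N' K' \<delta> :: real
  assumes pq: "0 \<le> p" "p \<le> 1" "0 \<le> q" "q \<le> 1" "0 \<le> p'" "p' \<le> 1" "0 \<le> q'" "q' \<le> 1"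
    and d: "\<bar>p' - p\<bar> \<le> \<delta>" "\<bar>q' - q\<bar> \<le> \<delta>" "\<bar>N' - N\<bar> \<le> 3 * \<delta>" "\<bar>K' - K\<bar> \<le> 3 * \<delta>"
    and R: "0 \<le> (Xr p q)\<^sup>2 - Yr p q N K" "0 \<le> (Xr p' q')\<^sup>2 - Yr p' q' N' K'"
  shows "\<bar>(Xr p' q' - sqrt ((Xr p' q')\<^sup>2 - Yr p' q' N' K')) - (Xr p q - sqrt ((Xr p q)\<^sup>2 - Yr p q N K))\<bar>
     \<le> 6 * \<delta> + sqrt (24 * \<delta>)"
proof -
  define X where "X = Xr p q"
  define X' where "X' = Xr p' q'"
  define Y where "Y = Yr p q N K"
  define Y' where "Y' = Yr p' q' N' K'"
  have a1: "\<bar>(p' - p) * q'\<bar> \<le> \<bar>p' - p\<bar>"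
    using pq by (simp add: abs_mult mult_left_le)
  have a2: "\<bar>p * (q' - q)\<bar> \<le> \<bar>q' - q\<bar>"
    using pq by (simp add: abs_mult mult_left_le_one_le)
  have "p' * q' - p * q = (p' - p) * q' + p * (q' - q)" by (simp add: algebra_simps)
  hence pqd: "\<bar>p' * q' - p * q\<bar> \<le> 2 * \<delta>" using a1 a2 d by linarith
  have "X' - X = 2 * (p' * q' - p * q) - (p' - p) - (q' - q)" by (simp add: X_def X'_def Xr_def algebra_simps)
  hence dX: "\<bar>X' - X\<bar> \<le> 6 * \<delta>" using pqd d by (smt (verit))
  have "Y = X - N + K - 1" "Y' = X' - N' + K' - 1"
    by (simp_all add: X_def X'_def Y_def Y'_def Xr_def Yr_def algebra_simps)
  hence dY: "\<bar>Y' - Y\<bar> \<le> 12 * \<delta>" using dX d by (smt (verit))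
  have X01: "0 \<le> X" "X \<le> 1" "0 \<le> X'" "X' \<le> 1"
  proof -
    have "X = p * q + (1 - p) * (1 - q)" "X' = p' * q' + (1 - p') * (1 - q')"
      by (simp_all add: X_def X'_def Xr_def algebra_simps)
    moreover have "0 \<le> p * q" "0 \<le> (1 - p) * (1 - q)" "0 \<le> p' * q'" "0 \<le> (1 - p') * (1 - q')"
      using pq by auto
    moreover have "p * q + (1 - p) * (1 - q) \<le> 1" "p' * q' + (1 - p') * (1 - q') \<le> 1"
    proof -
      have "p * q \<le> p" "(1 - p) * (1 - q) \<le> 1 - p" using pq by (auto simp: mult_left_le)
      thus "p * q + (1 - p) * (1 - q) \<le> 1" by linarith
      have "p' * q' \<le> p'" "(1 - p') * (1 - q') \<le> 1 - p'" using pq by (auto simp: mult_left_le)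
      thus "p' * q' + (1 - p') * (1 - q') \<le> 1" by linarith
    qed
    ultimately show "0 \<le> X" "X \<le> 1" "0 \<le> X'" "X' \<le> 1" by linarith+
  qed
  have "\<bar>X'\<^sup>2 - X\<^sup>2\<bar> = \<bar>X' - X\<bar> * \<bar>X' + X\<bar>" by (simp add: power2_eq_square algebra_simps flip: abs_mult)
  also have "\<dots> \<le> (6 * \<delta>) * 2" using dX X01 by (intro mult_mono) auto
  finally have dX2: "\<bar>X'\<^sup>2 - X\<^sup>2\<bar> \<le> 12 * \<delta>" by simp
  have dR: "\<bar>(X'\<^sup>2 - Y') - (X\<^sup>2 - Y)\<bar> \<le> 24 * \<delta>" using dX2 dY by (smt (verit))
  have "\<bar>sqrt (X'\<^sup>2 - Y') - sqrt (X\<^sup>2 - Y)\<bar> \<le> sqrt \<bar>(X'\<^sup>2 - Y') - (X\<^sup>2 - Y)\<bar>"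
    by (rule sqrt_diff) (use R in \<open>simp_all add: X_def X'_def Y_def Y'_def\<close>)
  also have "\<dots> \<le> sqrt (24 * \<delta>)" using dR by simp
  finally have dS: "\<bar>sqrt (X'\<^sup>2 - Y') - sqrt (X\<^sup>2 - Y)\<bar> \<le> sqrt (24 * \<delta>)" .
  show ?thesis using dX dS unfolding X_def[symmetric] X'_def[symmetric] Y_def[symmetric] Y'_def[symmetric]
    by (smt (verit))
qed



lemma triv_onorm:
  assumes "\<not> (\<exists>x::'a::complex_inner. x \<noteq> 0)"
  shows "onorm (f::'a \<Rightarrow> 'a) = 0"
proof -
  have z: "\<And>z::'a. z = 0" using assms by blast
  have "f = (\<lambda>x. 0)" by (rule ext) (rule z)
  thus ?thesis by (simp add: onorm_zero)
qed

lemma triv_vals: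
  assumes "\<not> (\<exists>x::'a::complex_inner. x \<noteq> 0)"
  shows "X_fun (A::'a \<Rightarrow> 'a) = 1" "Y_fun A = 0" "S2 A = 0"
  by (simp_all add: X_fun_def Y_fun_def S2_def triv_onorm[OF assms])

lemma RLA:
  fixes A :: "'a::complex_inner \<Rightarrow> 'a"
  assumes e: "is_effect A" and nt: "\<exists>x::'a. x \<noteq> 0"
  shows "0 \<le> (X_fun A)\<^sup>2 - Y_fun A" "0 \<le> S2 A" "S2 A \<le> 1"
    "S2 A = 0 \<longleftrightarrow> 1 - onorm (complement_op A) = onorm A"
    "S2 A = 1 \<longleftrightarrow> 1 - onorm (complement_op A) = 0 \<and> onorm A = 1 \<and> onorm (A \<circ> complement_op A) = 0"
  using RL[OF spec_facts[OF e nt]] unfolding S2_def X_fun_def Y_fun_def by simp_all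

lemma radicand_nonneg: "is_effect (A::'a::complex_inner \<Rightarrow> 'a) \<Longrightarrow> 0 \<le> (X_fun A)\<^sup>2 - Y_fun A"
proof (cases "\<exists>x::'a. x \<noteq> 0")
  case True
  assume "is_effect A" thus ?thesis using RLA(1) True by blast
next
  case False thus ?thesis by (simp add: triv_vals)
qed

lemma S1: "is_effect (A::'a::complex_inner \<Rightarrow> 'a) \<Longrightarrow> 0 \<le> S2 A \<and> S2 A \<le> 1"
proof (cases "\<exists>x::'a. x \<noteq> 0")
  case True
  assume "is_effect A" thus ?thesis using RLA(2,3) True by blast
next
  case False thus ?thesis by (simp add: triv_vals)
qed

lemma S2_zero:
  fixes A :: "'a::complex_inner \<Rightarrow> 'a"
  assumes e: "is_effect A"
  shows "S2 A = 0 \<longleftrightarrow> trivial_effect A"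
proof (cases "\<exists>x::'a. x \<noteq> 0")
  case False
  have z: "\<And>z::'a. z = 0" using False by blast
  have "A = (\<lambda>x. 0 *\<^sub>R x)" by (rule ext) (simp add: z[of "A _"])
  hence "trivial_effect A" unfolding trivial_effect_def by (intro exI[of _ 0]) (simp add: fun_eq_iff)
  thus ?thesis using triv_vals[OF False] by simp
next
  case nt: True
  show ?thesis
  proof
    assume "S2 A = 0"
    hence eq: "1 - onorm (complement_op A) = onorm A" using RLA[OF e nt] by simp
    show "trivial_effect A" unfolding trivial_effect_def
      using trivial_of_eq[OF e eq] effect_onorm_ge0[OF e] effect_onorm_le1[OF e] by blast
  next
    assume "trivial_effect A"
    then obtain l where l: "0 \<le> l" "l \<le> 1" "A = (\<lambda>x. l *\<^sub>R x)" unfolding trivial_effect_def by blast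
    have tu: "ip u (A u) = l" if "norm u = 1" for u using that by (simp add: l(3) ip_scaleR_right ip_self)
    have 1: "onorm A \<le> l" by (rule onorm_le_nr[OF e nt]) (simp add: tu)
    have 2: "onorm (complement_op A) \<le> 1 - l" by (rule onorm_compl_le_nr[OF e nt]) (simp add: tu)
    have "1 - onorm (complement_op A) = onorm A" using 1 2 mM_le[OF e nt] by linarith
    thus "S2 A = 0" using RLA[OF e nt] by simp
  qed
qed

lemma S2_one:
  fixes A :: "'a::complex_inner \<Rightarrow> 'a"
  assumes e: "is_effect A"
  shows "S2 A = 1 \<longleftrightarrow> nontrivial_projection A"
proof (cases "\<exists>x::'a. x \<noteq> 0")
  case False
  have z: "\<And>z::'a. z = 0" using False by blast
  have "A = (\<lambda>x. 0)" by (rule ext) (rule z)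
  hence "\<not> nontrivial_projection A" by (simp add: nontrivial_projection_def)
  thus ?thesis using triv_vals[OF False] by simp
next
  case nt: True
  have bl: "bounded_linear A" by (rule effect_bl[OF e])
  interpret A: bounded_linear A by (rule bl)
  have sa: "selfadjoint A" using e by (simp add: is_effect_def)
  have blAA: "bounded_linear (A \<circ> complement_op A)" by (rule effect_bl[OF effect_AA[OF e]])
  have blc: "bounded_linear (complement_op A)" by (rule effect_bl[OF effect_complement[OF e]])
  have AAx: "(A \<circ> complement_op A) x = A x - A (A x)" for x by (simp add: complement_op_def A.diff)
  show ?thesis
  proof
    assume "S2 A = 1"
    hence h: "1 - onorm (complement_op A) = 0" "onorm A = 1" "onorm (A \<circ> complement_op A) = 0"
      using RLA[OF e nt] by simp_all
    have "(A \<circ> complement_op A) x = 0" for x using h(3) onorm_eq_0[OF blAA] by simp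
    hence idem: "A \<circ> A = A" using AAx by (simp add: fun_eq_iff)
    have n0: "A \<noteq> (\<lambda>x. 0)"
    proof
      assume "A = (\<lambda>x. 0)"
      hence "onorm A = 0" by (simp add: onorm_zero)
      thus False using h(2) by simp
    qed
    have n1: "A \<noteq> id"
    proof
      assume "A = id"
      hence "complement_op A = (\<lambda>x. 0)" by (simp add: complement_op_def fun_eq_iff)
      hence "onorm (complement_op A) = 0" by (simp add: onorm_zero)
      thus False using h(1) by simp
    qed
    show "nontrivial_projection A" using sa idem n0 n1 by (simp add: nontrivial_projection_def is_projection_def)
  next
    assume np: "nontrivial_projection A"
    hence idem: "A \<circ> A = A" and n0: "A \<noteq> (\<lambda>x. 0)" and n1: "A \<noteq> id"
      by (auto simp: nontrivial_projection_def is_projection_def)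
    have AA: "A (A x) = A x" for x using idem by (metis comp_apply)
    have N0: "A \<circ> complement_op A = (\<lambda>x. 0)" by (rule ext) (simp add: complement_op_def A.diff AA)
    obtain x where x: "A x \<noteq> 0" using n0 by auto
    have "norm (A (A x)) \<le> onorm A * norm (A x)" by (rule onorm[OF bl])
    hence "norm (A x) \<le> onorm A * norm (A x)" by (simp add: AA)
    moreover have "0 < norm (A x)" using x by simp
    ultimately have "1 \<le> onorm A" by (simp add: mult_le_cancel_right1)
    hence M1: "onorm A = 1" using effect_onorm_le1[OF e] by linarith
    obtain x' where x': "A x' \<noteq> x'" using n1 by (auto simp: fun_eq_iff)
    define y where "y = x' - A x'"
    have y0: "y \<noteq> 0" using x' by (simp add: y_def)
    have cy: "complement_op A y = y" by (simp add: complement_op_def y_def A.diff AA)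
    have "norm (complement_op A y) \<le> onorm (complement_op A) * norm y" by (rule onorm[OF blc])
    hence "norm y \<le> onorm (complement_op A) * norm y" by (simp add: cy)
    moreover have "0 < norm y" using y0 by simp
    ultimately have "1 \<le> onorm (complement_op A)" by (simp add: mult_le_cancel_right1)
    hence q1: "onorm (complement_op A) = 1"
      using effect_onorm_le1[OF effect_complement[OF e]] by linarith
    show "S2 A = 1" using RLA[OF e nt] M1 q1 N0 by (simp add: onorm_zero)
  qed
qed

lemma S2_compl:
  fixes A :: "'a::complex_inner \<Rightarrow> 'a"
  assumes e: "is_effect A"
  shows "S2 (complement_op A) = S2 A"
proof -
  have c: "complement_op A \<circ> A = A \<circ> complement_op A"
    by (simp add: effect_commute[OF e])
  show ?thesis unfolding S2_def X_fun_def Y_fun_def complement_complement c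
    by (simp add: algebra_simps)
qed

lemma S2_cont:
  fixes A :: "'a::complex_inner \<Rightarrow> 'a"
  assumes a: "is_effect A" and e0: "0 < e"
  shows "\<exists>d>0. \<forall>B\<in>effects. onorm (\<lambda>x. B x - A x) < d \<longrightarrow> \<bar>S2 B - S2 A\<bar> < e"
proof (intro exI[of _ "min (e/12) (e\<^sup>2/100)"] conjI ballI impI)
  show "0 < min (e/12) (e\<^sup>2/100)" using e0 by simp
  fix B assume "B \<in> effects" and dlt: "onorm (\<lambda>x. B x - A x) < min (e/12) (e\<^sup>2/100)"
  hence b: "is_effect B" by (simp add: effects_def)
  define \<delta> where "\<delta> = onorm (\<lambda>x. B x - A x)"
  have blA: "bounded_linear A" by (rule effect_bl[OF a])
  have blB: "bounded_linear B" by (rule effect_bl[OF b])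
  interpret A: bounded_linear A by (rule blA)
  interpret B: bounded_linear B by (rule blB)
  have blD: "bounded_linear (\<lambda>x. B x - A x)" by (rule bounded_linear_sub[OF blB blA])
  have d0: "0 \<le> \<delta>" by (simp add: \<delta>_def onorm_pos_le[OF blD])
  have pw: "norm (B x - A x) \<le> \<delta> * norm x" for x using onorm[OF blD, of x] by (simp add: \<delta>_def)
  have AAx: "(A \<circ> complement_op A) x = A x - A (A x)" for x by (simp add: complement_op_def A.diff)
  have BBx: "(B \<circ> complement_op B) x = B x - B (B x)" for x by (simp add: complement_op_def B.diff)
  have pw3: "norm ((B \<circ> complement_op B) x - (A \<circ> complement_op A) x) \<le> (3 * \<delta>) * norm x" for x
  proof -
    have eq: "(B \<circ> complement_op B) x - (A \<circ> complement_op A) x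
        = (B x - A x) - B (B x - A x) - (B (A x) - A (A x))"
      by (simp add: complement_op_def A.diff B.diff algebra_simps)
    have "norm (B (B x - A x)) \<le> norm (B x - A x)" by (rule effect_normle[OF b])
    moreover have "norm (B (A x) - A (A x)) \<le> \<delta> * norm (A x)" by (rule pw)
    moreover have "\<delta> * norm (A x) \<le> \<delta> * norm x" using effect_normle[OF a] d0 by (intro mult_left_mono) auto
    moreover have "norm ((B x - A x) - B (B x - A x) - (B (A x) - A (A x)))
        \<le> norm (B x - A x) + norm (B (B x - A x)) + norm (B (A x) - A (A x))"
      by (smt (verit) norm_triangle_ineq4)
    ultimately show ?thesis using eq pw[of x] by simp
  qed
  have dp: "\<bar>onorm B - onorm A\<bar> \<le> \<delta>" by (rule onorm_diff_bound[OF blB blA pw d0])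
  have dq: "\<bar>onorm (complement_op B) - onorm (complement_op A)\<bar> \<le> \<delta>"
    by (rule onorm_diff_bound[OF effect_bl[OF effect_complement[OF b]] effect_bl[OF effect_complement[OF a]] _ d0])
       (simp add: complement_op_def, subst norm_minus_commute, rule pw)
  have dN: "\<bar>onorm (B \<circ> complement_op B) - onorm (A \<circ> complement_op A)\<bar> \<le> 3 * \<delta>"
    by (rule onorm_diff_bound[OF effect_bl[OF effect_AA[OF b]] effect_bl[OF effect_AA[OF a]] pw3]) (use d0 in simp)
  have dK: "\<bar>onorm (complement_op (B \<circ> complement_op B)) - onorm (complement_op (A \<circ> complement_op A))\<bar> \<le> 3 * \<delta>"
    by (rule onorm_diff_bound[OF effect_bl[OF effect_complement[OF effect_AA[OF b]]]
          effect_bl[OF effect_complement[OF effect_AA[OF a]]]])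
       (use d0 pw3 in \<open>simp_all add: complement_op_def norm_minus_commute\<close>)
  have rc: "\<bar>S2 B - S2 A\<bar> \<le> 6 * \<delta> + sqrt (24 * \<delta>)"
    using RC[OF effect_onorm_ge0[OF a] effect_onorm_le1[OF a]
        effect_onorm_ge0[OF effect_complement[OF a]] effect_onorm_le1[OF effect_complement[OF a]]
        effect_onorm_ge0[OF b] effect_onorm_le1[OF b]
        effect_onorm_ge0[OF effect_complement[OF b]] effect_onorm_le1[OF effect_complement[OF b]]
        dp dq dN dK]
      radicand_nonneg[OF a] radicand_nonneg[OF b]
    unfolding S2_eq X_fun_eq Y_fun_eq by simp
  have 1: "6 * \<delta> < e / 2" using dlt by (simp add: \<delta>_def)
  have "\<delta> * 100 < e * e" using dlt by (simp add: \<delta>_def power2_eq_square)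
  moreover have "(e / 2)\<^sup>2 = e * e / 4" by (simp add: power2_eq_square)
  ultimately have "24 * \<delta> < (e / 2)\<^sup>2" using d0 by linarith
  hence "sqrt (24 * \<delta>) < sqrt ((e / 2)\<^sup>2)" by (rule real_sqrt_less_mono)
  hence 2: "sqrt (24 * \<delta>) < e / 2" using e0 by simp
  show "\<bar>S2 B - S2 A\<bar> < e" using rc 1 2 by linarith
qed

theorem mainTheorem11:
  assumes "separable_hspace TYPE('a::{complex_inner, complete_space})"
  shows "(\<forall>A::'a \<Rightarrow> 'a. A \<in> effects \<longrightarrow> 0 \<le> (X_fun A)\<^sup>2 - Y_fun A)
         \<and> sharpness_measure (S2 :: ('a \<Rightarrow> 'a) \<Rightarrow> real)"
proof -
  have 1: "\<forall>A::'a \<Rightarrow> 'a. A \<in> effects \<longrightarrow> 0 \<le> (X_fun A)\<^sup>2 - Y_fun A"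
    using radicand_nonneg by (auto simp: effects_def)
  have 2: "\<forall>A::'a \<Rightarrow> 'a\<in>effects. 0 \<le> S2 A \<and> S2 A \<le> 1" using S1 by (auto simp: effects_def)
  have 3: "\<forall>A::'a \<Rightarrow> 'a\<in>effects. S2 A = 0 \<longleftrightarrow> trivial_effect A" using S2_zero by (auto simp: effects_def)
  have 4: "\<forall>A::'a \<Rightarrow> 'a\<in>effects. S2 A = 1 \<longleftrightarrow> nontrivial_projection A" using S2_one by (auto simp: effects_def)
  have 5: "\<forall>A::'a \<Rightarrow> 'a\<in>effects. S2 (complement_op A) = S2 A" using S2_compl by (auto simp: effects_def)
  have 6: "\<forall>A::'a \<Rightarrow> 'a\<in>effects. \<forall>C. invertible_op C \<and> C \<circ> A \<circ> inv C \<in> effects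
          \<longrightarrow> S2 (C \<circ> A \<circ> inv C) = S2 A" using S2_sim by (auto simp: effects_def)
  have 7: "\<forall>A::'a \<Rightarrow> 'a\<in>effects. \<forall>e>0. \<exists>d>0. \<forall>B\<in>effects.
          onorm (\<lambda>x. B x - A x) < d \<longrightarrow> \<bar>S2 B - S2 A\<bar> < e"
  proof (intro ballI allI impI)
    fix A :: "'a \<Rightarrow> 'a" and e :: real assume "A \<in> effects" "0 < e"
    thus "\<exists>d>0. \<forall>B\<in>effects. onorm (\<lambda>x. B x - A x) < d \<longrightarrow> \<bar>S2 B - S2 A\<bar> < e"
      by (intro S2_cont) (simp_all add: effects_def)
  qed
  show ?thesis unfolding sharpness_measure_def using 1 2 3 4 5 6 7 by blast
qed

end
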